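(* Let $\mathbf{AUS}_3$ be the set of density matrices $\sigma$ on $\mathbb{C}^2\otimes\mathbb{C}^2$ such that for every unitary $U$ on $\mathbb{C}^2\otimes\mathbb{C}^2$, every choice of unit vectors $\hat u_1,\hat u_2,\hat u_3\in\mathbb{R}^3$ and every choice of orthonormal vectors $\hat v_1,\hat v_2,\hat v_3\in\mathbb{R}^3$, $$\frac{1}{\sqrt3}\Big|\sum_{i=1}^3\mathrm{Tr}\big(U\sigma U^\dagger\,(\hat u_i\cdot\vec s)\otimes(\hat v_i\cdot\vec s)\big)\Big|\le 1.$$ Then a two-qubit state $\sigma$ belongs to $\mathbf{AUS}_3$ if and only if its purity satisfies $\mathrm{Tr}(\sigma^2)\le 1/2$; equivalently, iff $\|\sigma-I/4\|_F\le 1/2$, where $\|\cdot\|_F$ is the Frobenius norm.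
   Context: $\vec{s}=(s_1,s_2,s_3)$ denotes the vector of Pauli matrices, and for $\hat w\in\mathbb{R}^3$, $\hat w\cdot\vec s=\sum_k w_k s_k$. The purity of $\sigma$ is $\mathrm{Tr}(\sigma^2)$. *)

theory Defs
  imports "HOL-Analysis.Analysis"
begin

text \<open>Two-qubit space C^2 (x) C^2 is indexed by the product type 2 \<times> 2.
  Basis index 0 / 1 of the type 2 corresponds to |0> / |1>.\<close>

type_synonym qmat = "complex ^ 2 ^ 2"
type_synonym qqmat = "complex ^ (2 \<times> 2) ^ (2 \<times> 2)"

definition mtrace :: "complex ^ 'n ^ 'n \<Rightarrow> complex" where
  "mtrace A = (\<Sum>i\<in>UNIV. A $ i $ i)"

definition adj :: "complex ^ 'n ^ 'm \<Rightarrow> complex ^ 'm ^ 'n" where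
  "adj A = (\<chi> i j. cnj (A $ j $ i))"

definition hermitian :: "complex ^ 'n ^ 'n \<Rightarrow> bool" where
  "hermitian A \<longleftrightarrow> adj A = A"

definition psd :: "complex ^ 'n ^ 'n \<Rightarrow> bool" where
  "psd A \<longleftrightarrow> hermitian A \<and>
     (\<forall>v :: complex ^ 'n. 0 \<le> Re (\<Sum>i\<in>UNIV. \<Sum>j\<in>UNIV. cnj (v $ i) * A $ i $ j * v $ j))"

definition density_matrix :: "complex ^ 'n ^ 'n \<Rightarrow> bool" where
  "density_matrix A \<longleftrightarrow> psd A \<and> mtrace A = 1"

definition unitary :: "complex ^ 'n ^ 'n \<Rightarrow> bool" where
  "unitary U \<longleftrightarrow> U ** adj U = mat 1 \<and> adj U ** U = mat 1"

definition kron :: "qmat \<Rightarrow> qmat \<Rightarrow> qqmat" where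
  "kron A B = (\<chi> p q. A $ fst p $ fst q * B $ snd p $ snd q)"

definition pauli_x :: qmat where
  "pauli_x = (\<chi> i j. if i = j then 0 else 1)"
definition pauli_y :: qmat where
  "pauli_y = (\<chi> i j. if i = j then 0 else if i = 0 then - \<i> else \<i>)"
definition pauli_z :: qmat where
  "pauli_z = (\<chi> i j. if i \<noteq> j then 0 else if i = 0 then 1 else -1)"

definition pauli :: "3 \<Rightarrow> qmat" where
  "pauli k = (if k = 0 then pauli_x else if k = 1 then pauli_y else pauli_z)"

definition dot_pauli :: "real ^ 3 \<Rightarrow> qmat" where
  "dot_pauli w = (\<Sum>k\<in>UNIV. (\<chi> a b. complex_of_real (w $ k) * pauli k $ a $ b))"

definition frob_norm :: "complex ^ 'n ^ 'm \<Rightarrow> real" where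
  "frob_norm A = sqrt (\<Sum>i\<in>UNIV. \<Sum>j\<in>UNIV. (cmod (A $ i $ j))\<^sup>2)"

definition AUS3 :: "qqmat set" where
  "AUS3 = {\<sigma>. density_matrix \<sigma> \<and>
     (\<forall>U u v. unitary U \<longrightarrow>
        (\<forall>i\<in>{1,2,3::nat}. norm (u i) = 1) \<longrightarrow>
        (\<forall>i\<in>{1,2,3::nat}. \<forall>j\<in>{1,2,3::nat}. v i \<bullet> v j = (if i = j then 1 else 0)) \<longrightarrow>
        1 / sqrt 3 * cmod (\<Sum>i\<in>{1,2,3::nat}.
            mtrace (U ** \<sigma> ** adj U ** kron (dot_pauli (u i)) (dot_pauli (v i)))) \<le> 1)}"

end

theory Submission
  imports Defs
begin


lemma adj_nth[simp]: "adj A $ i $ j = cnj (A $ j $ i)"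
  by (simp add: adj_def)

lemma adj_adj[simp]: "adj (adj A) = A"
  by (simp add: vec_eq_iff)

lemma adj_mult: "adj (A ** B) = adj B ** adj A"
  by (simp add: vec_eq_iff matrix_matrix_mult_def mult.commute)

lemma adj_mat1[simp]: "adj (mat 1 :: complex^'n^'n) = mat 1"
  by (simp add: vec_eq_iff mat_def)

lemma mtrace_comm: "mtrace ((A::complex^'n^'m) ** B) = mtrace (B ** A)"
  unfolding mtrace_def matrix_matrix_mult_def
  by (simp, subst sum.swap, simp add: mult.commute)

lemma mtrace_add: "mtrace (A + B) = mtrace A + mtrace B"
  by (simp add: mtrace_def sum.distrib)

lemma mtrace_sum: "mtrace (sum f S) = (\<Sum>x\<in>S. mtrace (f x))"
  unfolding mtrace_def by (simp add: sum_component, subst sum.swap, rule refl)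



lemma UNIV3: "(UNIV::3 set) = {0,1,2}"
proof -
  have "x \<in> {0,1,2}" for x :: 3 using exhaust_3[of x] by auto
  then show ?thesis by blast
qed

lemma UNIV2: "(UNIV::2 set) = {0,1}"
proof -
  have "x \<in> {0,1}" for x :: 2 using exhaust_2[of x] by auto
  then show ?thesis by blast
qed

lemma three0: "(3::3) = 0" by simp
lemma two0: "(2::2) = 0" by simp
lemma sum3: "sum f (UNIV::3 set) = f 0 + f 1 + f 2"
  unfolding sum_3 three0 by (simp add: ac_simps)
lemma sum2: "sum f (UNIV::2 set) = f 0 + f 1"
  unfolding sum_2 two0 by (simp add: ac_simps)
lemma neq3: "(1::3) \<noteq> 0" "(2::3) \<noteq> 0" "(2::3) \<noteq> 1" "(0::3) \<noteq> 1" "(0::3) \<noteq> 2" "(1::3) \<noteq> 2"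
  by simp_all
lemma neq2: "(1::2) \<noteq> 0" "(0::2) \<noteq> 1"
  by simp_all

lemma dot_pauli_nth: "dot_pauli w $ i $ j =
   (if i = j then (if i = 0 then complex_of_real (w$2) else - complex_of_real (w$2))
    else if i = 0 then complex_of_real (w$0) - \<i> * complex_of_real (w$1)
    else complex_of_real (w$0) + \<i> * complex_of_real (w$1))"
proof -
  have "dot_pauli w $ i $ j = (\<Sum>k\<in>UNIV. complex_of_real (w $ k) * pauli k $ i $ j)"
    unfolding dot_pauli_def by (simp add: sum_component)
  also have "\<dots> = complex_of_real (w $ 0) * pauli_x $ i $ j + complex_of_real (w $ 1) * pauli_y $ i $ j
     + complex_of_real (w $ 2) * pauli_z $ i $ j"
    unfolding sum3 pauli_def using neq3 by simp
  finally show ?thesis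
    unfolding pauli_x_def pauli_y_def pauli_z_def by simp
qed


definition frob2 :: "complex^'n^'m \<Rightarrow> real" where
  "frob2 A = (\<Sum>i\<in>UNIV. \<Sum>j\<in>UNIV. (cmod (A $ i $ j))\<^sup>2)"

definition hs :: "complex^'n^'m \<Rightarrow> complex^'n^'m \<Rightarrow> complex" where
  "hs A B = (\<Sum>i\<in>UNIV. \<Sum>j\<in>UNIV. A $ i $ j * cnj (B $ i $ j))"

lemma frob_norm_frob2: "frob_norm A = sqrt (frob2 A)"
  by (simp add: frob_norm_def frob2_def)

lemma frob2_nonneg: "0 \<le> frob2 A"
  by (simp add: frob2_def sum_nonneg)

lemma hs_self: "hs A A = complex_of_real (frob2 A)"
  unfolding hs_def frob2_def of_real_sum complex_norm_square ..

lemma mtrace_adj: "mtrace (A ** adj B) = hs A B"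
  unfolding mtrace_def hs_def matrix_matrix_mult_def by simp

lemma mtrace_hs: "mtrace (A ** B) = hs A (adj B)"
  using mtrace_adj[of A "adj B"] by simp

lemma hs_CS: "cmod (hs A B) \<le> sqrt (frob2 A) * sqrt (frob2 B)"
proof -
  have "cmod (hs A B) \<le> (\<Sum>i\<in>UNIV. \<Sum>j\<in>UNIV. cmod (A $ i $ j) * cmod (B $ i $ j))"
    unfolding hs_def
    by (rule order.trans[OF norm_sum sum_mono], rule order.trans[OF norm_sum sum_mono],
        simp add: norm_mult)
  also have "\<dots> = (\<Sum>p\<in>UNIV \<times> UNIV. cmod (A $ fst p $ snd p) * cmod (B $ fst p $ snd p))"
    by (simp add: sum.cartesian_product case_prod_beta)
  also have "\<dots> \<le> sqrt (\<Sum>p\<in>UNIV \<times> UNIV. (cmod (A $ fst p $ snd p))\<^sup>2) *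
                    sqrt (\<Sum>p\<in>UNIV \<times> UNIV. (cmod (B $ fst p $ snd p))\<^sup>2)"
  proof -
    let ?a = "\<lambda>p. cmod (A $ fst p $ snd p)" and ?b = "\<lambda>p. cmod (B $ fst p $ snd p)"
    have "(\<Sum>p\<in>UNIV \<times> UNIV. ?a p * ?b p)\<^sup>2 \<le> (\<Sum>p\<in>UNIV \<times> UNIV. (?a p)\<^sup>2) * (\<Sum>p\<in>UNIV \<times> UNIV. (?b p)\<^sup>2)"
      by (rule Cauchy_Schwarz_ineq_sum)
    from real_le_rsqrt[OF this] show ?thesis unfolding real_sqrt_mult .
  qed
  also have "\<dots> = sqrt (frob2 A) * sqrt (frob2 B)"
    unfolding frob2_def by (simp add: sum.cartesian_product case_prod_beta)
  finally show ?thesis .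
qed

lemma frob2_hs: "frob2 A = Re (hs A A)"
  by (simp add: hs_self)

lemma frob2_mtrace: "frob2 A = Re (mtrace (A ** adj A))"
  by (simp add: mtrace_adj hs_self)

lemma unitary_frob2:
  assumes "unitary U"
  shows "frob2 (U ** X ** adj U) = frob2 X"
proof -
  have uu: "adj U ** U = mat 1" using assms by (simp add: unitary_def)
  have "(U ** X ** adj U) ** adj (U ** X ** adj U) = U ** X ** (adj U ** U) ** adj X ** adj U"
    by (simp add: adj_mult matrix_mul_assoc)
  also have "\<dots> = U ** (X ** adj X) ** adj U"
    by (simp add: uu matrix_mul_assoc)
  finally have "mtrace ((U ** X ** adj U) ** adj (U ** X ** adj U)) = mtrace (U ** (X ** adj X) ** adj U)"
    by simp
  also have "\<dots> = mtrace ((X ** adj X) ** adj U ** U)"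
    by (metis matrix_mul_assoc mtrace_comm)
  also have "\<dots> = mtrace ((X ** adj X) ** (adj U ** U))"
    by (simp add: matrix_mul_assoc)
  also have "\<dots> = mtrace (X ** adj X)" by (simp add: uu)
  finally show ?thesis by (simp add: frob2_mtrace)
qed



lemma sum_pair2: "(\<Sum>p\<in>(UNIV::('a::finite \<times> 'b::finite) set). f p) = (\<Sum>a\<in>UNIV. \<Sum>b\<in>UNIV. f (a, b))"
  using sum.cartesian_product[of "\<lambda>a b. f (a,b)" UNIV UNIV] by simp

lemma mtrace_kron: "mtrace (kron A B) = mtrace A * mtrace B"
  unfolding mtrace_def kron_def by (simp add: sum_pair2 sum_product)

lemma hs_kron: "hs (kron A B) (kron C D) = hs A C * hs B D"
  unfolding hs_def kron_def
  by (simp add: sum_pair2 sum2 algebra_simps)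

lemma mtrace_dot_pauli: "mtrace (dot_pauli w) = 0"
  unfolding mtrace_def by (simp add: sum2 dot_pauli_nth neq2)

lemma hs_dot_pauli: "hs (dot_pauli a) (dot_pauli b) = complex_of_real (2 * (a \<bullet> b))"
  unfolding hs_def inner_vec_def
  by (simp add: sum2 sum3 dot_pauli_nth neq2 algebra_simps complex_eq_iff)

lemma matrix_mul_sum_right: "(A::'a::semiring_1^'n^'m) ** sum f S = (\<Sum>x\<in>S. A ** f x)"
  by (induct S rule: infinite_finite_induct) (simp_all add: matrix_add_ldistrib)

lemma hs_sum_left: "hs (sum f S) B = (\<Sum>x\<in>S. hs (f x) B)"
  unfolding hs_def by (simp add: sum_component sum_distrib_right, subst sum.swap, subst (2) sum.swap, rule refl)

lemma hs_sum_right: "hs A (sum f S) = (\<Sum>x\<in>S. hs A (f x))"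
  unfolding hs_def by (simp add: sum_component sum_distrib_left, subst sum.swap, subst (2) sum.swap, rule refl)

lemma hs_diff_left: "hs (A - B) C = hs A C - hs B C"
  unfolding hs_def by (simp add: algebra_simps sum_subtractf)

lemma frob2_adj: "frob2 (adj A) = frob2 A"
  unfolding frob2_def by (simp, subst sum.swap, rule refl)

lemma hs_mat1: "hs (mat 1) B = cnj (mtrace B)"
  unfolding hs_def mtrace_def mat_def by (simp add: if_distrib if_distribR sum.delta cong del: if_weak_cong)

lemma matrix_sub_ldistrib': "(A::'a::ring_1^'n^'m) ** (B - C) = A ** B - A ** C"
  by (simp add: vec_eq_iff matrix_matrix_mult_def algebra_simps sum_subtractf)
lemma matrix_sub_rdistrib': "((B - C)::'a::ring_1^'n^'m) ** A = B ** A - C ** A"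
  by (simp add: vec_eq_iff matrix_matrix_mult_def algebra_simps sum_subtractf)



lemma unitary_conj_scalar:
  assumes "unitary U"
  shows "U ** (c *\<^sub>R mat 1) ** adj U = (c *\<^sub>R mat 1 :: complex^'n^'n)"
proof -
  have "U ** (c *\<^sub>R mat 1) = c *\<^sub>R U" by (simp add: matrix_scalar_ac)
  then have "U ** (c *\<^sub>R mat 1) ** adj U = c *\<^sub>R (U ** adj U)" by (simp add: scalar_matrix_assoc)
  then show ?thesis using assms by (simp add: unitary_def)
qed

lemma hs_scaleR_left: "hs (c *\<^sub>R A) B = complex_of_real c * hs A B"
  unfolding hs_def vector_scaleR_component unfolding scaleR_conv_of_real by (simp add: sum_distrib_left mult.assoc)

lemma adj_sum: "adj (sum f S) = (\<Sum>x\<in>S. adj (f x))"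
  by (simp add: vec_eq_iff adj_def sum_component cnj_sum)

lemma mtrace_adj': "mtrace (adj A) = cnj (mtrace A)"
  unfolding mtrace_def by simp

lemma frame_sum:
  fixes u v :: "nat \<Rightarrow> real^3"
  assumes un: "\<forall>i\<in>{1,2,3::nat}. norm (u i) = 1"
    and on: "\<forall>i\<in>{1,2,3::nat}. \<forall>j\<in>{1,2,3::nat}. v i \<bullet> v j = (if i = j then 1 else 0)"
  shows "(\<Sum>i\<in>{1,2,3::nat}. \<Sum>j\<in>{1,2,3::nat}. 2 * (u i \<bullet> u j) * (2 * (v i \<bullet> v j))) = 12"
proof -
  have uu: "u i \<bullet> u i = 1" if "i \<in> {1,2,3}" for i
    using un that by (metis inner_commute norm_eq_1)
  show ?thesis using uu on by (simp add: numeral_eq_Suc)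
qed

lemma backward:
  fixes \<sigma> U :: qqmat and u v :: "nat \<Rightarrow> real^3"
  assumes f: "frob2 (\<sigma> - (1/4) *\<^sub>R mat 1) \<le> 1/4"
    and U: "unitary U"
    and un: "\<forall>i\<in>{1,2,3::nat}. norm (u i) = 1"
    and on: "\<forall>i\<in>{1,2,3::nat}. \<forall>j\<in>{1,2,3::nat}. v i \<bullet> v j = (if i = j then 1 else 0)"
  shows "1 / sqrt 3 * cmod (\<Sum>i\<in>{1,2,3::nat}.
            mtrace (U ** \<sigma> ** adj U ** kron (dot_pauli (u i)) (dot_pauli (v i)))) \<le> 1"
proof -
  define K where "K i = kron (dot_pauli (u i)) (dot_pauli (v i))" for i
  define M where "M = (\<Sum>i\<in>{1,2,3::nat}. K i)"
  define \<rho> where "\<rho> = U ** \<sigma> ** adj U"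
  define c :: real where "c = 1/4"
  define X where "X = U ** (\<sigma> - c *\<^sub>R mat 1) ** adj U"
  have S: "(\<Sum>i\<in>{1,2,3::nat}. mtrace (U ** \<sigma> ** adj U ** K i)) = hs \<rho> (adj M)"
    unfolding M_def adj_sum hs_sum_right \<rho>_def mtrace_hs ..
  have X: "X = \<rho> - c *\<^sub>R mat 1"
    unfolding X_def \<rho>_def using unitary_conj_scalar[OF U, of c]
    by (simp add: matrix_sub_ldistrib' matrix_sub_rdistrib')
  have trM: "mtrace M = 0"
    unfolding M_def mtrace_sum K_def mtrace_kron mtrace_dot_pauli by simp
  have "hs \<rho> (adj M) = hs X (adj M)"
    unfolding X by (simp add: hs_diff_left hs_scaleR_left hs_mat1 mtrace_adj' trM)
  have frM: "frob2 M = 12"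
  proof -
    have "hs M M = (\<Sum>i\<in>{1,2,3::nat}. \<Sum>j\<in>{1,2,3::nat}. hs (K i) (K j))"
      unfolding M_def hs_sum_left hs_sum_right by (rule sum.swap)
    also have "\<dots> = complex_of_real (\<Sum>i\<in>{1,2,3::nat}. \<Sum>j\<in>{1,2,3::nat}. 2 * (u i \<bullet> u j) * (2 * (v i \<bullet> v j)))"
      unfolding K_def hs_kron hs_dot_pauli of_real_sum of_real_mult ..
    finally show ?thesis using frame_sum[OF un on] by (simp add: frob2_hs)
  qed
  have fX: "frob2 X \<le> 1/4" unfolding X_def unitary_frob2[OF U] c_def using f .
  have "cmod (hs X (adj M)) \<le> sqrt (frob2 X) * sqrt (frob2 (adj M))" by (rule hs_CS)
  also have "\<dots> \<le> sqrt (1/4) * sqrt 12"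
    unfolding frob2_adj frM using fX by (simp add: mult_right_mono)
  also have "\<dots> = sqrt 3"
  proof -
    have "sqrt (1/4) * sqrt 12 = sqrt (1/4 * 12)" by (simp only: real_sqrt_mult)
    then show ?thesis by simp
  qed
  finally have "cmod (hs \<rho> (adj M)) \<le> sqrt 3" using \<open>hs \<rho> (adj M) = hs X (adj M)\<close> by simp
  then show ?thesis using S unfolding K_def by (simp add: field_simps)
qed



lemma sum_if2:
  fixes x y :: complex
  assumes "a \<noteq> b"
  shows "(\<Sum>k\<in>(UNIV::'n::finite set). (if k = a then x else if k = b then y else 0) * F k) = x * F a + y * F b"
proof -
  have "(\<Sum>k\<in>(UNIV::'n set). (if k = a then x else if k = b then y else 0) * F k)
     = (\<Sum>k\<in>UNIV. (if k = a then x * F a else 0) + (if k = b then y * F b else 0))"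
    by (rule sum.cong) (use assms in auto)
  also have "\<dots> = x * F a + y * F b" by (simp add: sum.distrib)
  finally show ?thesis .
qed

lemma sum_if2':
  fixes x y :: complex
  assumes "a \<noteq> b"
  shows "(\<Sum>k\<in>(UNIV::'n::finite set). F k * (if k = a then x else if k = b then y else 0)) = F a * x + F b * y"
  using sum_if2[OF assms, of x y F] by (simp add: mult.commute)

definition givens :: "'n \<Rightarrow> 'n \<Rightarrow> complex \<Rightarrow> complex \<Rightarrow> complex^'n^'n" where
  "givens a b c s = (\<chi> p k. if p = a then (if k = a then c else if k = b then s else 0)
     else if p = b then (if k = a then - cnj s else if k = b then cnj c else 0)
     else (if p = k then 1 else 0))"

lemma givens_conj_entry:
  fixes \<rho> :: "complex^'n::finite^'n"
  assumes ab: "a \<noteq> b"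
  shows "(givens a b c s ** \<rho> ** adj (givens a b c s)) $ p $ p =
    (if p = a then c * cnj c * \<rho>$a$a + s * cnj s * \<rho>$b$b + c * cnj s * \<rho>$a$b + s * cnj c * \<rho>$b$a
     else if p = b then s * cnj s * \<rho>$a$a + c * cnj c * \<rho>$b$b - c * cnj s * \<rho>$a$b - s * cnj c * \<rho>$b$a
     else \<rho>$p$p)"
proof -
  let ?G = "givens a b c s"
  have e: "(?G ** \<rho> ** adj ?G) $ p $ p = (\<Sum>l\<in>UNIV. (\<Sum>k\<in>UNIV. ?G$p$k * \<rho>$k$l) * cnj (?G$p$l))"
    by (simp add: matrix_matrix_mult_def)
  show ?thesis
  proof (cases "p = a")
    case True
    have g: "?G$p$k = (if k = a then c else if k = b then s else 0)" for k
      using True by (simp add: givens_def)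
    have g': "cnj (?G$p$l) = (if l = a then cnj c else if l = b then cnj s else 0)" for l
      using True by (simp add: givens_def)
    have i: "(\<Sum>k\<in>UNIV. ?G$p$k * \<rho>$k$l) = c * \<rho>$a$l + s * \<rho>$b$l" for l
      unfolding g by (rule sum_if2[OF ab])
    show ?thesis unfolding e i g' sum_if2'[OF ab] using ab True
      by (simp add: algebra_simps)
  next
    case pa: False
    show ?thesis
    proof (cases "p = b")
      case True
      have g: "?G$p$k = (if k = a then - cnj s else if k = b then cnj c else 0)" for k
        using True ab by (simp add: givens_def)
      have g': "cnj (?G$p$l) = (if l = a then - s else if l = b then c else 0)" for l
        using True ab by (simp add: givens_def)
      have i: "(\<Sum>k\<in>UNIV. ?G$p$k * \<rho>$k$l) = - cnj s * \<rho>$a$l + cnj c * \<rho>$b$l" for l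
        unfolding g by (rule sum_if2[OF ab])
      show ?thesis unfolding e i g' sum_if2'[OF ab] using ab True
        by (simp add: algebra_simps)
    next
      case False
      have g: "?G$p$k = (if k = p then 1 else 0)" for k
        using False pa by (simp add: givens_def)
      have g': "cnj (?G$p$l) = (if l = p then 1 else 0)" for l
        using False pa by (simp add: givens_def)
      show ?thesis unfolding e g' g using pa False
        by (simp add: if_distrib if_distribR sum.delta cong del: if_weak_cong)
    qed
  qed
qed

lemma sum_delta1: "(\<Sum>k\<in>(UNIV::'n::finite set). (if k = p then 1 else 0) * (F k :: complex)) = F p"
  by (simp add: if_distrib if_distribR sum.delta cong del: if_weak_cong)

lemma givens_unitary:
  assumes ab: "a \<noteq> b" and cs: "c * cnj c + s * cnj s = 1"
  shows "unitary (givens a b c s :: complex^'n::finite^'n)"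
proof -
  let ?G = "givens a b c s :: complex^'n^'n"
  have rowa: "?G$a$k = (if k = a then c else if k = b then s else 0)" for k
    by (simp add: givens_def)
  have rowb: "?G$b$k = (if k = a then - cnj s else if k = b then cnj c else 0)" for k
    using ab by (simp add: givens_def)
  have rowo: "p \<noteq> a \<Longrightarrow> p \<noteq> b \<Longrightarrow> ?G$p$k = (if k = p then 1 else 0)" for p k
    by (auto simp add: givens_def)
  have "(?G ** adj ?G) $ p $ q = (if p = q then 1 else 0)" for p q
  proof -
    have e: "(?G ** adj ?G) $ p $ q = (\<Sum>k\<in>UNIV. ?G$p$k * cnj (?G$q$k))"
      by (simp add: matrix_matrix_mult_def)
    show ?thesis unfolding e
      using ab cs
      apply (cases "p = a"; cases "p = b"; cases "q = a"; cases "q = b")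
      apply (simp_all only: rowa rowb rowo if_distrib[of cnj] complex_cnj_cnj complex_cnj_zero complex_cnj_one complex_cnj_minus
             sum_if2[OF ab] sum_delta1 simp_thms if_True if_False)
      apply (simp_all add: algebra_simps)
      done
  qed
  then have 1: "?G ** adj ?G = mat 1" by (simp add: vec_eq_iff mat_def)
  then have 2: "adj ?G ** ?G = mat 1" by (rule matrix_left_right_inverse1)
  show ?thesis using 1 2 by (simp add: unitary_def)
qed



lemma cont_conj: "continuous_on UNIV (\<lambda>U::complex^'n::finite^'n. U ** B ** adj U)"
  unfolding matrix_matrix_mult_def adj_def
  by (intro continuous_intros)

lemma cont_mul_adj: "continuous_on UNIV (\<lambda>U::complex^'n::finite^'n. U ** adj U)"
  unfolding matrix_matrix_mult_def adj_def
  by (intro continuous_intros)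

lemma cont_adj_mul: "continuous_on UNIV (\<lambda>U::complex^'n::finite^'n. adj U ** U)"
  unfolding matrix_matrix_mult_def adj_def
  by (intro continuous_intros)

lemma closed_unitary: "closed {U::complex^'n::finite^'n. unitary U}"
proof -
  have "{U::complex^'n^'n. unitary U} = {U. U ** adj U = mat 1} \<inter> {U. adj U ** U = mat 1}"
    by (auto simp: unitary_def)
  moreover have "closed {U::complex^'n^'n. U ** adj U = mat 1}"
    by (rule closed_Collect_eq[OF cont_mul_adj continuous_on_const])
  moreover have "closed {U::complex^'n^'n. adj U ** U = mat 1}"
    by (rule closed_Collect_eq[OF cont_adj_mul continuous_on_const])
  ultimately show ?thesis by auto
qed

lemma norm_mat_frob2: "norm (A::complex^'n::finite^'m::finite) = sqrt (frob2 A)"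
proof -
  have "norm A = sqrt (\<Sum>i\<in>UNIV. (norm (A $ i))\<^sup>2)"
    by (simp add: norm_vec_def L2_set_def)
  also have "(\<lambda>i. (norm (A $ i))\<^sup>2) = (\<lambda>i. \<Sum>j\<in>UNIV. (cmod (A $ i $ j))\<^sup>2)"
    by (simp add: norm_vec_def L2_set_def sum_nonneg)
  finally show ?thesis by (simp add: frob2_def)
qed

lemma mtrace_mat1: "mtrace (mat 1 :: complex^'n::finite^'n) = of_nat CARD('n)"
  by (simp add: mtrace_def mat_def)

lemma bounded_unitary: "bounded {U::complex^'n::finite^'n. unitary U}"
proof -
  have "norm U \<le> sqrt (real CARD('n))" if "unitary U" for U :: "complex^'n^'n"
  proof -
    have "frob2 U = real CARD('n)"
      using that by (simp add: frob2_mtrace unitary_def mtrace_mat1)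
    then show ?thesis by (simp add: norm_mat_frob2)
  qed
  then show ?thesis unfolding bounded_iff by blast
qed

lemma compact_unitary: "compact {U::complex^'n::finite^'n. unitary U}"
  using closed_unitary bounded_unitary compact_eq_bounded_closed by blast

lemma unitary_mat1: "unitary (mat 1 :: complex^'n::finite^'n)"
  by (simp add: unitary_def)

lemma unitary_mult: "unitary A \<Longrightarrow> unitary B \<Longrightarrow> unitary (A ** (B::complex^'n::finite^'n))"
proof -
  assume A: "unitary A" and B: "unitary B"
  have "A ** B ** adj (A ** B) = A ** (B ** adj B) ** adj A"
    by (simp add: adj_mult matrix_mul_assoc)
  also have "\<dots> = mat 1" using A B by (simp add: unitary_def)
  finally have 1: "A ** B ** adj (A ** B) = mat 1" .
  have "adj (A ** B) ** (A ** B) = adj B ** (adj A ** A) ** B"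
    by (simp add: adj_mult matrix_mul_assoc)
  also have "\<dots> = mat 1" using A B by (simp add: unitary_def)
  finally show ?thesis using 1 by (simp add: unitary_def)
qed



lemma sum_two_points:
  fixes g :: "'n::finite \<Rightarrow> real"
  assumes "a \<noteq> b" "\<And>p. p \<noteq> a \<Longrightarrow> p \<noteq> b \<Longrightarrow> g p = 0"
  shows "sum g UNIV = g a + g b"
proof -
  have "sum g UNIV = sum g {a,b}"
    by (rule sum.mono_neutral_right) (use assms in auto)
  then show ?thesis using assms by simp
qed

lemma givens_gain_re:
  fixes \<rho> :: "complex^'n::finite^'n"
  assumes ab: "a \<noteq> b" and herm: "\<rho>$b$a = cnj (\<rho>$a$b)"
    and C: "c * cnj c = complex_of_real C2" and S: "s * cnj s = complex_of_real S2"
    and Z: "c * cnj s * \<rho>$a$b = complex_of_real Z"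
  shows "Re ((givens a b c s ** \<rho> ** adj (givens a b c s))$a$a) = C2 * Re (\<rho>$a$a) + S2 * Re (\<rho>$b$b) + 2 * Z"
    and "Re ((givens a b c s ** \<rho> ** adj (givens a b c s))$b$b) = S2 * Re (\<rho>$a$a) + C2 * Re (\<rho>$b$b) - 2 * Z"
proof -
  have Z': "s * cnj c * \<rho>$b$a = complex_of_real Z"
  proof -
    have "s * cnj c * \<rho>$b$a = cnj (c * cnj s * \<rho>$a$b)" using herm by simp
    then show ?thesis using Z by simp
  qed
  have C': "c * cnj c * \<rho>$a$a = complex_of_real C2 * \<rho>$a$a" using C by simp
  have S': "s * cnj s * \<rho>$b$b = complex_of_real S2 * \<rho>$b$b" using S by simp
  have C'': "c * cnj c * \<rho>$b$b = complex_of_real C2 * \<rho>$b$b" using C by simp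
  have S'': "s * cnj s * \<rho>$a$a = complex_of_real S2 * \<rho>$a$a" using S by simp
  show "Re ((givens a b c s ** \<rho> ** adj (givens a b c s))$a$a) = C2 * Re (\<rho>$a$a) + S2 * Re (\<rho>$b$b) + 2 * Z"
    unfolding givens_conj_entry[OF ab] using ab by (simp add: C' S' Z Z')
  show "Re ((givens a b c s ** \<rho> ** adj (givens a b c s))$b$b) = S2 * Re (\<rho>$a$a) + C2 * Re (\<rho>$b$b) - 2 * Z"
    unfolding givens_conj_entry[OF ab] using ab by (simp add: C'' S'' Z Z')
qed

lemma adj_conj_herm:
  assumes "adj \<sigma> = \<sigma>"
  shows "adj (U ** \<sigma> ** adj U) = U ** \<sigma> ** adj U"
  using assms by (simp add: adj_mult matrix_mul_assoc)

lemma diagonalize: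
  fixes \<sigma> :: "complex^'n::finite^'n"
  assumes herm: "adj \<sigma> = \<sigma>"
  shows "\<exists>U. unitary U \<and> (\<forall>p q. p \<noteq> q \<longrightarrow> (U ** \<sigma> ** adj U)$p$q = 0)"
proof -
  obtain d0 :: "'n \<Rightarrow> nat" and n where "d0 ` UNIV = {i. i < n}" "inj_on d0 UNIV"
    using finite_imp_inj_to_nat_seg[of "UNIV :: 'n set"] by auto
  then have inj: "inj d0" by simp
  define d where "d p = real (d0 p)" for p
  have dinj: "d p \<noteq> d q" if "p \<noteq> q" for p q
    using inj that by (auto simp: d_def inj_eq)
  define F where "F U = (\<Sum>p\<in>UNIV. d p * Re ((U ** \<sigma> ** adj U)$p$p))" for U :: "complex^'n^'n"
  have cont: "continuous_on {U. unitary U} F"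
    unfolding F_def matrix_matrix_mult_def adj_def
    by (intro continuous_intros)
  obtain U0 where U0: "unitary U0" and max: "\<And>U. unitary U \<Longrightarrow> F U \<le> F U0"
    using continuous_attains_sup[OF compact_unitary _ cont] unitary_mat1 by blast
  define \<rho> where "\<rho> = U0 ** \<sigma> ** adj U0"
  have hermr: "\<rho>$q$p = cnj (\<rho>$p$q)" for p q
  proof -
    have "adj \<rho> = \<rho>" unfolding \<rho>_def by (rule adj_conj_herm[OF herm])
    then have "adj \<rho> $ q $ p = \<rho> $ q $ p" by simp
    then show ?thesis by simp
  qed
  have "\<rho>$a$b = 0" if ab: "a \<noteq> b" for a b
  proof (rule ccontr)
    assume r0: "\<rho>$a$b \<noteq> 0"
    define r where "r = \<rho>$a$b"
    define \<alpha> where "\<alpha> = Re (\<rho>$a$a)"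
    define \<beta> where "\<beta> = Re (\<rho>$b$b)"
    define \<delta> where "\<delta> = d a - d b"
    define K where "K = \<bar>\<beta> - \<alpha>\<bar> + 1"
    define e where "e = sgn \<delta> / K"
    define m where "m = (cmod r)\<^sup>2"
    define n2 where "n2 = 1 + e\<^sup>2 * m"
    define N where "N = sqrt n2"
    define c where "c = complex_of_real (1 / N)"
    define s where "s = complex_of_real (e / N) * r"
    have m0: "m > 0" using r0 by (simp add: m_def r_def)
    have n2pos: "n2 > 0" unfolding n2_def using m0 by (simp add: add_pos_nonneg)
    have NN: "N * N = n2" unfolding N_def using n2pos by simp
    have Npos: "N > 0" unfolding N_def using n2pos by simp
    have rr: "r * cnj r = complex_of_real m" unfolding m_def by (rule complex_norm_square[symmetric])
    have C: "c * cnj c = complex_of_real (1 / n2)"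
      unfolding c_def using NN by (simp flip: of_real_mult)
    have S: "s * cnj s = complex_of_real (e\<^sup>2 * m / n2)"
    proof -
      have "s * cnj s = complex_of_real (e / N) * complex_of_real (e / N) * (r * cnj r)"
        unfolding s_def by (simp add: ac_simps)
      also have "\<dots> = complex_of_real (e\<^sup>2 * m / n2)"
        unfolding rr using NN by (simp flip: of_real_mult add: power2_eq_square)
      finally show ?thesis .
    qed
    have Z: "c * cnj s * \<rho>$a$b = complex_of_real (e * m / n2)"
    proof -
      have "c * cnj s * \<rho>$a$b = complex_of_real (1 / N) * complex_of_real (e / N) * (r * cnj r)"
        unfolding c_def s_def r_def by (simp add: ac_simps)
      also have "\<dots> = complex_of_real (e * m / n2)"
        unfolding rr using NN by (simp flip: of_real_mult)
      finally show ?thesis .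
    qed
    have cs: "c * cnj c + s * cnj s = 1"
    proof -
      have "1/n2 + e\<^sup>2 * m / n2 = 1" using n2pos by (simp add: n2_def field_simps)
      then show ?thesis unfolding C S of_real_add[symmetric] by simp
    qed
    define G where "G = givens a b c s"
    have G: "unitary G" unfolding G_def by (rule givens_unitary[OF ab cs])
    have U': "unitary (G ** U0)" by (rule unitary_mult[OF G U0])
    have eq: "(G ** U0) ** \<sigma> ** adj (G ** U0) = G ** \<rho> ** adj G"
      unfolding \<rho>_def by (simp add: adj_mult matrix_mul_assoc)
    have ga: "Re ((G ** \<rho> ** adj G)$a$a) = (1/n2) * \<alpha> + (e\<^sup>2 * m / n2) * \<beta> + 2 * (e * m / n2)"
      unfolding G_def \<alpha>_def \<beta>_def by (rule givens_gain_re(1)[OF ab hermr C S Z])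
    have gb: "Re ((G ** \<rho> ** adj G)$b$b) = (e\<^sup>2 * m / n2) * \<alpha> + (1/n2) * \<beta> - 2 * (e * m / n2)"
      unfolding G_def \<alpha>_def \<beta>_def by (rule givens_gain_re(2)[OF ab hermr C S Z])
    have diff: "F (G ** U0) - F U0 = d a * (Re ((G ** \<rho> ** adj G)$a$a) - \<alpha>) + d b * (Re ((G ** \<rho> ** adj G)$b$b) - \<beta>)"
    proof -
      have "F (G ** U0) - F U0 = (\<Sum>p\<in>UNIV. d p * (Re ((G ** \<rho> ** adj G)$p$p) - Re (\<rho>$p$p)))"
        unfolding F_def eq \<rho>_def[symmetric] by (simp add: sum_subtractf algebra_simps)
      also have "\<dots> = d a * (Re ((G ** \<rho> ** adj G)$a$a) - Re (\<rho>$a$a)) + d b * (Re ((G ** \<rho> ** adj G)$b$b) - Re (\<rho>$b$b))"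
        by (rule sum_two_points[OF ab]) (simp add: G_def givens_conj_entry[OF ab])
      finally show ?thesis unfolding \<alpha>_def \<beta>_def .
    qed
    have key: "F (G ** U0) - F U0 = \<delta> * e * m * (e * (\<beta> - \<alpha>) + 2) / n2"
    proof -
      have h1: "1 / n2 = 1 - e\<^sup>2 * m / n2" using n2pos by (simp add: n2_def field_simps)
      have "F (G ** U0) - F U0 = \<delta> * ((e\<^sup>2 * m / n2) * (\<beta> - \<alpha>) + 2 * (e * m / n2))"
      proof -
        have gen: "d a * (((1 - t)*\<alpha> + t*\<beta> + 2*z) - \<alpha>) + d b*((t*\<alpha> + (1-t)*\<beta> - 2*z) - \<beta>)
           = (d a - d b)*(t*(\<beta>-\<alpha>) + 2*z)" for t z by (simp add: algebra_simps)
        show ?thesis unfolding diff ga gb \<delta>_def h1 by (rule gen)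
      qed
      also have "\<dots> = \<delta> * e * m * (e * (\<beta> - \<alpha>) + 2) / n2"
        using n2pos by (simp add: field_simps power2_eq_square)
      finally show ?thesis .
    qed
    have Kpos: "K > 0" unfolding K_def by simp
    have de: "\<delta> * e > 0"
    proof -
      have "\<delta> \<noteq> 0" unfolding \<delta>_def using dinj[OF ab] by simp
      then have "\<delta> * sgn \<delta> > 0" by (simp add: sgn_real_def)
      then show ?thesis unfolding e_def using Kpos by simp
    qed
    have t: "e * (\<beta> - \<alpha>) + 2 > 0"
    proof -
      have "\<bar>e\<bar> \<le> 1 / K" unfolding e_def using Kpos by (simp add: abs_sgn_eq abs_divide)
      then have "\<bar>e * (\<beta> - \<alpha>)\<bar> \<le> \<bar>\<beta> - \<alpha>\<bar> / K"
      proof -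
        have "\<bar>e\<bar> * \<bar>\<beta> - \<alpha>\<bar> \<le> (1 / K) * \<bar>\<beta> - \<alpha>\<bar>"
          by (rule mult_right_mono) (use \<open>\<bar>e\<bar> \<le> 1 / K\<close> in auto)
        then show ?thesis by (simp add: abs_mult)
      qed
      also have "\<dots> < 1" unfolding K_def by simp
      finally show ?thesis by linarith
    qed
    have "F (G ** U0) - F U0 > 0"
      unfolding key using de t m0 n2pos by (simp add: mult_pos_pos)
    with max[OF U'] show False by simp
  qed
  then show ?thesis using U0 unfolding \<rho>_def by blast
qed



lemma exhaust2': "x = (0::2) \<or> x = 1"
  using exhaust_2[of x] by auto

lemma pair_cases: "p = ((0::2),(0::2)) \<or> p = (0,1) \<or> p = (1,0) \<or> p = (1,1)"
  using exhaust2'[of "fst p"] exhaust2'[of "snd p"] by (cases p) auto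

definition bellW :: qqmat where
  "bellW = (\<chi> p j. if (fst p = snd p) = (snd j = 0)
      then (if fst j = 1 \<and> fst p = 1 then - 1 else 1) / complex_of_real (sqrt 2) else 0)"

lemma sum_qq: "(\<Sum>p\<in>(UNIV::(2\<times>2) set). f p) = f (0,0) + f (0,1) + f (1,0) + f (1,1)"
  by (simp add: sum_pair2 sum2 add.assoc)

lemma bell_exp:
  fixes x y :: "real^3"
  shows "(adj bellW ** kron (dot_pauli x) (dot_pauli y) ** bellW) $ j $ j =
    complex_of_real (x$0 * y$0 * (if fst j = 0 then 1 else -1) * (if snd j = 0 then 1 else 1)
      + x$1 * y$1 * (if fst j = 0 then -1 else 1) * (if snd j = 0 then 1 else -1)
      + x$2 * y$2 * (if snd j = 0 then 1 else -1))"
proof -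
  have s2: "complex_of_real (sqrt 2) * complex_of_real (sqrt 2) = 2"
    by (simp flip: of_real_mult)
  show ?thesis
  using pair_cases[of j]
  apply (elim disjE)
  apply (simp_all add: matrix_matrix_mult_def sum_qq kron_def bellW_def dot_pauli_nth neq2)
  apply (simp_all add: complex_eq_iff field_simps s2)
  done
qed



lemma sum_abc:
  fixes a b c :: 3
  assumes "a \<noteq> b" "a \<noteq> c" "b \<noteq> c"
  shows "(\<Sum>k\<in>UNIV. f k) = f a + f b + (f c :: real)"
proof -
  have "card {a,b,c} = 3" using assms by simp
  then have "{a,b,c} = (UNIV :: 3 set)"
    by (intro card_subset_eq) auto
  then have "(\<Sum>k\<in>UNIV. f k) = (\<Sum>k\<in>{a,b,c}. f k)" by simp
  then show ?thesis using assms by simp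
qed

lemma third_index:
  fixes a b :: 3
  assumes "a \<noteq> b"
  shows "\<exists>c. c \<noteq> a \<and> c \<noteq> b"
proof -
  have "card (UNIV :: 3 set) = 3" by simp
  then have "UNIV \<noteq> {a,b}" by (metis card_2_iff numeral_eq_iff semiring_norm(88) semiring_norm(89) assms)
  then show ?thesis by auto
qed

lemma balance_abc:
  fixes t :: "real^3" and a b c :: 3
  assumes ab: "a \<noteq> b" and ac: "a \<noteq> c" and bc: "b \<noteq> c"
    and m_def: "m = (\<Sum>k\<in>UNIV. (t$k)\<^sup>2) / 3"
    and da: "(t$a)\<^sup>2 \<ge> m" and db: "(t$b)\<^sup>2 \<le> m" and mpos: "m > 0"
  shows "\<exists>u v :: nat \<Rightarrow> real^3. (\<forall>i\<in>{1,2,3::nat}. norm (u i) = 1) \<and>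
      (\<forall>i\<in>{1,2,3::nat}. \<forall>j\<in>{1,2,3::nat}. v i \<bullet> v j = (if i = j then 1 else 0)) \<and>
      (\<Sum>i\<in>{1,2,3::nat}. \<Sum>k\<in>UNIV. (u i)$k * (v i)$k * t$k) = 3 * sqrt m"
proof -
  define d where "d k = (t$k)\<^sup>2" for k
  have msum: "d a + d b + d c = 3 * m" unfolding m_def d_def using sum_abc[OF ab ac bc] by simp
  define cs2 where "cs2 = (if d a = d b then 1 else (m - d b) / (d a - d b))"
  have cs2: "0 \<le> cs2" "cs2 \<le> 1" using da db by (auto simp: cs2_def d_def divide_simps)
  have q1: "cs2 * d a + (1 - cs2) * d b = m"
  proof (cases "d a = d b")
    case True then show ?thesis using da db by (simp add: cs2_def d_def)
  next
    case False
    then have h: "cs2 * (d a - d b) = m - d b" by (simp add: cs2_def)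
    show ?thesis using h by (simp add: algebra_simps)
  qed
  define co where "co = sqrt cs2"
  define si where "si = sqrt (1 - cs2)"
  have co2: "co * co = cs2" unfolding co_def using cs2 by simp
  have si2: "si * si = 1 - cs2" unfolding si_def using cs2 by simp
  define r where "r = 1 / sqrt 2"
  have r2: "r * r = 1/2" unfolding r_def by (simp add: divide_simps)
  define v1 :: "real^3" where "v1 = (\<chi> k. if k = a then co else if k = b then si else 0)"
  define v2 :: "real^3" where "v2 = (\<chi> k. if k = a then - si * r else if k = b then co * r else if k = c then r else 0)"
  define v3 :: "real^3" where "v3 = (\<chi> k. if k = a then - si * r else if k = b then co * r else if k = c then - r else 0)"
  define v :: "nat \<Rightarrow> real^3" where "v i = (if i = 1 then v1 else if i = 2 then v2 else v3)" for i
  define u :: "nat \<Rightarrow> real^3" where "u i = (\<chi> k. (v i)$k * t$k / sqrt m)" for i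
  have S: "(\<Sum>k\<in>UNIV. f k) = f a + f b + f c" for f :: "3 \<Rightarrow> real"
    by (rule sum_abc[OF ab ac bc])
  have inner3: "x \<bullet> y = x$a * y$a + x$b * y$b + x$c * y$c" for x y :: "real^3"
    unfolding inner_vec_def S by simp
  have ba: "b \<noteq> a" and ca: "c \<noteq> a" and cb: "c \<noteq> b" using ab ac bc by auto
  have e1: "v1$a = co" "v1$b = si" "v1$c = 0" unfolding v1_def using ab ac bc ba ca cb by auto
  have e2: "v2$a = - si * r" "v2$b = co * r" "v2$c = r" unfolding v2_def using ab ac bc ba ca cb by auto
  have e3: "v3$a = - si * r" "v3$b = co * r" "v3$c = - r" unfolding v3_def using ab ac bc ba ca cb by auto
  have i11: "v1 \<bullet> v1 = 1" unfolding inner3 e1 using co2 si2 by simp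
  have i12: "v1 \<bullet> v2 = 0" unfolding inner3 e1 e2 by (simp add: algebra_simps)
  have i13: "v1 \<bullet> v3 = 0" unfolding inner3 e1 e3 by (simp add: algebra_simps)
  have i22: "v2 \<bullet> v2 = 1"
  proof -
    have "v2 \<bullet> v2 = (si * si)*(r * r) + (co * co)*(r * r) + r * r" unfolding inner3 e2 by (simp add: algebra_simps)
    then show ?thesis using co2 si2 r2 by (simp add: field_simps)
  qed
  have i33: "v3 \<bullet> v3 = 1"
  proof -
    have "v3 \<bullet> v3 = (si * si)*(r * r) + (co * co)*(r * r) + r * r" unfolding inner3 e3 by (simp add: algebra_simps)
    then show ?thesis using co2 si2 r2 by (simp add: field_simps)
  qed
  have i23: "v2 \<bullet> v3 = 0"
  proof -
    have "v2 \<bullet> v3 = (si * si)*(r * r) + (co * co)*(r * r) - r * r" unfolding inner3 e2 e3 by (simp add: algebra_simps)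
    then show ?thesis using co2 si2 r2 by (simp add: field_simps)
  qed
  have on: "\<forall>i\<in>{1,2,3::nat}. \<forall>j\<in>{1,2,3::nat}. v i \<bullet> v j = (if i = j then 1 else 0)"
    unfolding v_def using i11 i12 i13 i22 i23 i33 by (simp add: inner_commute)
  have q: "(\<Sum>k\<in>UNIV. ((v i)$k)\<^sup>2 * d k) = m" if "i \<in> {1,2,3}" for i
  proof -
    have "(\<Sum>k\<in>UNIV. (v1$k)\<^sup>2 * d k) = (co * co) * d a + (si * si) * d b"
      unfolding S e1 by (simp add: power2_eq_square)
    then have Q1: "(\<Sum>k\<in>UNIV. (v1$k)\<^sup>2 * d k) = m" using co2 si2 q1 by simp
    have "(\<Sum>k\<in>UNIV. (v2$k)\<^sup>2 * d k) = (r * r) * ((si * si) * d a + (co * co) * d b + d c)"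
      unfolding S e2 by (simp add: power2_eq_square algebra_simps)
    also have "\<dots> = m" unfolding co2 si2 r2 using q1 msum by (simp add: algebra_simps)
    finally have Q2: "(\<Sum>k\<in>UNIV. (v2$k)\<^sup>2 * d k) = m" .
    have "(\<Sum>k\<in>UNIV. (v3$k)\<^sup>2 * d k) = (r * r) * ((si * si) * d a + (co * co) * d b + d c)"
      unfolding S e3 by (simp add: power2_eq_square algebra_simps)
    also have "\<dots> = m" unfolding co2 si2 r2 using q1 msum by (simp add: algebra_simps)
    finally have Q3: "(\<Sum>k\<in>UNIV. (v3$k)\<^sup>2 * d k) = m" .
    show ?thesis using that Q1 Q2 Q3 unfolding v_def by auto
  qed
  have un: "\<forall>i\<in>{1,2,3::nat}. norm (u i) = 1"
  proof
    fix i :: nat assume i: "i \<in> {1,2,3}"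
    have "u i \<bullet> u i = (\<Sum>k\<in>UNIV. ((v i)$k)\<^sup>2 * d k) / m"
      unfolding u_def inner_vec_def d_def using mpos
      by (simp add: sum_divide_distrib power2_eq_square field_simps)
    then have "u i \<bullet> u i = 1" using q[OF i] mpos by simp
    then show "norm (u i) = 1" by (simp add: norm_eq_sqrt_inner)
  qed
  have val: "(\<Sum>k\<in>UNIV. (u i)$k * (v i)$k * t$k) = sqrt m" if "i \<in> {1,2,3}" for i
  proof -
    have "(\<Sum>k\<in>UNIV. (u i)$k * (v i)$k * t$k) = (\<Sum>k\<in>UNIV. ((v i)$k)\<^sup>2 * d k) / sqrt m"
      unfolding u_def d_def by (simp add: sum_divide_distrib power2_eq_square ac_simps)
    also have "\<dots> = m / sqrt m" using q[OF that] by simp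
    also have "\<dots> = sqrt m" using mpos by (simp add: real_div_sqrt)
    finally show ?thesis .
  qed
  have "(\<Sum>i\<in>{1,2,3::nat}. \<Sum>k\<in>UNIV. (u i)$k * (v i)$k * t$k) = 3 * sqrt m"
    using val by simp
  then show ?thesis using un on by blast
qed

lemma balance:
  fixes t :: "real^3"
  assumes pos: "(\<Sum>k\<in>UNIV. (t$k)\<^sup>2) > 0"
  shows "\<exists>u v :: nat \<Rightarrow> real^3. (\<forall>i\<in>{1,2,3::nat}. norm (u i) = 1) \<and>
      (\<forall>i\<in>{1,2,3::nat}. \<forall>j\<in>{1,2,3::nat}. v i \<bullet> v j = (if i = j then 1 else 0)) \<and>
      (\<Sum>i\<in>{1,2,3::nat}. \<Sum>k\<in>UNIV. (u i)$k * (v i)$k * t$k) = 3 * sqrt ((\<Sum>k\<in>UNIV. (t$k)\<^sup>2) / 3)"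
proof -
  define m where "m = (\<Sum>k\<in>UNIV. (t$k)\<^sup>2) / 3"
  define d where "d k = (t$k)\<^sup>2" for k
  have mpos: "m > 0" using pos by (simp add: m_def)
  have "Max (range d) \<in> range d" by (rule Max_in) auto
  then obtain a where a: "d a = Max (range d)" by (metis rangeE)
  have amax: "d k \<le> d a" for k unfolding a by (rule Max_ge) auto
  have "Min (range d) \<in> range d" by (rule Min_in) auto
  then obtain b where b: "d b = Min (range d)" by (metis rangeE)
  have bmin: "d b \<le> d k" for k unfolding b by (rule Min_le) auto
  have da: "d a \<ge> m"
  proof -
    have "(\<Sum>k\<in>UNIV. d k) \<le> of_nat (card (UNIV :: 3 set)) * d a"
      by (rule sum_bounded_above) (use amax in auto)
    then show ?thesis unfolding m_def d_def by simp
  qed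
  have db: "d b \<le> m"
  proof -
    have "of_nat (card (UNIV :: 3 set)) * d b \<le> (\<Sum>k\<in>UNIV. d k)"
      by (rule sum_bounded_below) (use bmin in auto)
    then show ?thesis unfolding m_def d_def by simp
  qed
  obtain b' where ab': "a \<noteq> b'" and db': "d b' \<le> m"
  proof (cases "a = b")
    case False then show ?thesis using that db by blast
  next
    case True
    obtain b' where "b' \<noteq> a" using third_index[of a "a + 1"] by auto
    moreover have "d b' \<le> m" using amax[of b'] True db by simp
    ultimately show ?thesis by (intro that[of b']) auto
  qed
  obtain c where c: "c \<noteq> a" "c \<noteq> b'" using third_index[OF ab'] by auto
  have ac: "a \<noteq> c" "b' \<noteq> c" using c by auto
  from balance_abc[OF ab' ac m_def da[unfolded d_def] db'[unfolded d_def] mpos]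
  show ?thesis unfolding m_def .

qed



lemma bellW_unitary: "unitary bellW"
proof -
  have s2: "complex_of_real (sqrt 2) * complex_of_real (sqrt 2) = 2"
    by (simp flip: of_real_mult)
  have "(bellW ** adj bellW) $ p $ q = mat 1 $ p $ q" for p q
    using pair_cases[of p] pair_cases[of q]
    apply (elim disjE)
    apply (simp_all add: matrix_matrix_mult_def sum_qq bellW_def mat_def neq2)
    apply (simp_all add: field_simps s2)
    done
  then have 1: "bellW ** adj bellW = mat 1" by (simp add: vec_eq_iff)
  then have 2: "adj bellW ** bellW = mat 1" by (rule matrix_left_right_inverse1)
  show ?thesis using 1 2 by (simp add: unitary_def)
qed

definition tvec :: "(2\<times>2 \<Rightarrow> real) \<Rightarrow> real^3" where
  "tvec pv = (\<chi> k. if k = 0 then pv (0,0) + pv (0,1) - pv (1,0) - pv (1,1)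
     else if k = 1 then - pv (0,0) + pv (0,1) + pv (1,0) - pv (1,1)
     else pv (0,0) - pv (0,1) + pv (1,0) - pv (1,1))"

lemma mtrace_diag:
  "mtrace ((\<chi> i j. if i = j then complex_of_real (pv i) else 0) ** Z) = (\<Sum>j\<in>UNIV. complex_of_real (pv j) * Z$j$j)"
  unfolding mtrace_def matrix_matrix_mult_def
  by (simp add: if_distrib if_distribR sum.delta cong del: if_weak_cong)

lemma bell_value:
  fixes x y :: "real^3" and pv :: "2\<times>2 \<Rightarrow> real"
  defines "D \<equiv> (\<chi> i j. if i = j then complex_of_real (pv i) else 0) :: qqmat"
  shows "mtrace (bellW ** D ** adj bellW ** kron (dot_pauli x) (dot_pauli y)) =
    complex_of_real (\<Sum>k\<in>UNIV. x$k * y$k * tvec pv $ k)"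
proof -
  let ?K = "kron (dot_pauli x) (dot_pauli y)"
  have "mtrace (bellW ** D ** adj bellW ** ?K) = mtrace (bellW ** (D ** adj bellW ** ?K))"
    by (simp add: matrix_mul_assoc)
  also have "\<dots> = mtrace (D ** adj bellW ** ?K ** bellW)"
    by (rule mtrace_comm)
  also have "\<dots> = mtrace (D ** (adj bellW ** ?K ** bellW))"
    by (simp add: matrix_mul_assoc)
  also have "\<dots> = (\<Sum>j\<in>UNIV. complex_of_real (pv j) * (adj bellW ** ?K ** bellW)$j$j)"
    unfolding D_def by (rule mtrace_diag)
  also have "\<dots> = complex_of_real (\<Sum>k\<in>UNIV. x$k * y$k * tvec pv $ k)"
    unfolding bell_exp sum_qq sum3 tvec_def using neq3
    by (simp add: algebra_simps flip: of_real_mult of_real_add)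
  finally show ?thesis .
qed



lemma dm_herm: "density_matrix \<sigma> \<Longrightarrow> adj \<sigma> = \<sigma>"
  by (simp add: density_matrix_def psd_def hermitian_def)

lemma dm_trace: "density_matrix \<sigma> \<Longrightarrow> mtrace \<sigma> = 1"
  by (simp add: density_matrix_def)

lemma purity_frob2:
  assumes "density_matrix \<sigma>"
  shows "Re (mtrace (\<sigma> ** \<sigma>)) = frob2 \<sigma>"
proof -
  have "\<sigma> ** \<sigma> = \<sigma> ** adj \<sigma>" using dm_herm[OF assms] by simp
  then show ?thesis by (simp add: frob2_mtrace)
qed

lemma hs_diff_right: "hs C (A - B) = hs C A - hs C B"
  unfolding hs_def by (simp add: algebra_simps sum_subtractf)

lemma hs_scaleR_right: "hs B (c *\<^sub>R A) = complex_of_real c * hs B A"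
  unfolding hs_def vector_scaleR_component unfolding scaleR_conv_of_real
  by (simp add: sum_distrib_left ac_simps)

lemma frob2_shift:
  fixes \<sigma> :: qqmat
  assumes "density_matrix \<sigma>"
  shows "frob2 (\<sigma> - (1/4) *\<^sub>R mat 1) = frob2 \<sigma> - 1/4"
proof -
  have tr: "mtrace \<sigma> = 1" by (rule dm_trace[OF assms])
  have h1: "hs \<sigma> (mat 1) = 1" using mtrace_adj[of \<sigma> "mat 1"] tr by simp
  have h2: "hs (mat 1) \<sigma> = 1" using tr by (simp add: hs_mat1)
  have card: "CARD(2\<times>2) = 4" by simp
  have h3: "hs (mat 1) (mat 1 :: qqmat) = 4" by (simp add: hs_mat1 mtrace_mat1 card)
  have "hs (\<sigma> - (1/4) *\<^sub>R mat 1) (\<sigma> - (1/4) *\<^sub>R mat 1) = hs \<sigma> \<sigma> - 1/4"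
    by (simp add: hs_diff_left hs_diff_right hs_scaleR_left hs_scaleR_right h1 h2 h3)
  then show ?thesis by (simp add: frob2_hs)
qed

lemma forward:
  fixes \<sigma> :: qqmat
  assumes dm: "density_matrix \<sigma>" and A: "\<sigma> \<in> AUS3"
  shows "frob2 \<sigma> \<le> 1/2"
proof (rule ccontr)
  assume big: "\<not> frob2 \<sigma> \<le> 1/2"
  have herm: "adj \<sigma> = \<sigma>" by (rule dm_herm[OF dm])
  obtain U0 where U0: "unitary U0" and off: "\<And>p q. p \<noteq> q \<Longrightarrow> (U0 ** \<sigma> ** adj U0)$p$q = 0"
    using diagonalize[OF herm] by blast
  define \<rho> where "\<rho> = U0 ** \<sigma> ** adj U0"
  define pv where "pv j = Re (\<rho>$j$j)" for j
  define D :: qqmat where "D = (\<chi> i j. if i = j then complex_of_real (pv i) else 0)"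
  have hr: "adj \<rho> = \<rho>" unfolding \<rho>_def by (rule adj_conj_herm[OF herm])
  have diagreal: "\<rho>$j$j = complex_of_real (pv j)" for j
  proof -
    have "cnj (\<rho>$j$j) = \<rho>$j$j" using arg_cong[OF hr, of "\<lambda>M. M$j$j"] by simp
    then show ?thesis unfolding pv_def by (metis Reals_cnj_iff complex_is_Real_iff of_real_Re)
  qed
  have rD: "\<rho> = D"
    unfolding D_def vec_eq_iff using off diagreal by (auto simp: \<rho>_def[symmetric])
  have sump: "(\<Sum>j\<in>UNIV. pv j) = 1"
  proof -
    have "mtrace \<rho> = mtrace (\<sigma> ** adj U0 ** U0)"
      unfolding \<rho>_def by (metis matrix_mul_assoc mtrace_comm)
    also have "\<dots> = mtrace \<sigma>" using U0 by (simp add: unitary_def flip: matrix_mul_assoc)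
    finally have "mtrace \<rho> = 1" using dm_trace[OF dm] by simp
    then show ?thesis unfolding mtrace_def pv_def by (metis Re_sum one_complex.simps(1))
  qed
  have sumsq: "(\<Sum>j\<in>UNIV. (pv j)\<^sup>2) = frob2 \<sigma>"
  proof -
    have "frob2 \<rho> = frob2 \<sigma>" unfolding \<rho>_def by (rule unitary_frob2[OF U0])
    moreover have "frob2 \<rho> = (\<Sum>j\<in>UNIV. (pv j)\<^sup>2)"
      unfolding rD frob2_def D_def
      by (simp add: if_distrib if_distribR sum.delta cong del: if_weak_cong)
    ultimately show ?thesis by simp
  qed
  define t where "t = tvec pv"
  have T: "(\<Sum>k\<in>UNIV. (t$k)\<^sup>2) = 4 * (\<Sum>j\<in>UNIV. (pv j)\<^sup>2) - (\<Sum>j\<in>UNIV. pv j)\<^sup>2"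
    unfolding t_def tvec_def sum3 sum_qq using neq3 by (simp add: power2_eq_square algebra_simps)
  then have Tgt: "(\<Sum>k\<in>UNIV. (t$k)\<^sup>2) > 1" using sump sumsq big by simp
  obtain u v where un: "\<forall>i\<in>{1,2,3::nat}. norm (u i) = 1"
    and on: "\<forall>i\<in>{1,2,3::nat}. \<forall>j\<in>{1,2,3::nat}. v i \<bullet> v j = (if i = j then 1 else 0)"
    and val: "(\<Sum>i\<in>{1,2,3::nat}. \<Sum>k\<in>UNIV. (u i)$k * (v i)$k * t$k) = 3 * sqrt ((\<Sum>k\<in>UNIV. (t$k)\<^sup>2) / 3)"
    using balance[of t] Tgt by auto
  define U1 where "U1 = bellW ** U0"
  have U1: "unitary U1" unfolding U1_def by (rule unitary_mult[OF bellW_unitary U0])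
  have conj: "U1 ** \<sigma> ** adj U1 = bellW ** D ** adj bellW"
    unfolding U1_def rD[symmetric] \<rho>_def by (simp add: adj_mult matrix_mul_assoc)
  have bound: "1 / sqrt 3 * cmod (\<Sum>i\<in>{1,2,3::nat}.
            mtrace (U1 ** \<sigma> ** adj U1 ** kron (dot_pauli (u i)) (dot_pauli (v i)))) \<le> 1"
    using A U1 un on unfolding AUS3_def by blast
  define T where "T = (\<Sum>k\<in>UNIV. (t$k)\<^sup>2)"
  have "(\<Sum>i\<in>{1,2,3::nat}. mtrace (U1 ** \<sigma> ** adj U1 ** kron (dot_pauli (u i)) (dot_pauli (v i))))
      = complex_of_real (3 * sqrt (T / 3))"
    unfolding conj D_def bell_value of_real_sum[symmetric] t_def[symmetric] using val
    by (simp add: T_def mult.assoc)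
  with bound have le: "1 / sqrt 3 * (3 * sqrt (T / 3)) \<le> 1" by simp
  have eq: "1 / sqrt 3 * (3 * sqrt (T / 3)) = sqrt T"
  proof -
    have "sqrt 3 * sqrt 3 = (3::real)" by simp
    then show ?thesis by (simp add: real_sqrt_divide field_simps)
  qed
  from le have "sqrt T \<le> 1" unfolding eq .
  moreover have "sqrt T > 1" using Tgt unfolding T_def by simp
  ultimately show False by simp
qed



lemma AUS3_iff:
  fixes \<sigma> :: qqmat
  assumes dm: "density_matrix \<sigma>"
  shows "\<sigma> \<in> AUS3 \<longleftrightarrow> frob2 \<sigma> \<le> 1/2"
proof
  assume "\<sigma> \<in> AUS3" then show "frob2 \<sigma> \<le> 1/2" by (rule forward[OF dm])
next
  assume f: "frob2 \<sigma> \<le> 1/2"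
  have f': "frob2 (\<sigma> - (1/4) *\<^sub>R mat 1) \<le> 1/4" using f frob2_shift[OF dm] by simp
  show "\<sigma> \<in> AUS3" unfolding AUS3_def using dm backward[OF f'] by blast
qed

theorem corollary1:
  fixes \<sigma> :: qqmat
  assumes "density_matrix \<sigma>"
  shows "(\<sigma> \<in> AUS3 \<longleftrightarrow> Re (mtrace (\<sigma> ** \<sigma>)) \<le> 1 / 2)
       \<and> (\<sigma> \<in> AUS3 \<longleftrightarrow> frob_norm (\<sigma> - (1 / 4) *\<^sub>R mat 1) \<le> 1 / 2)"
proof -
  have e1: "\<sigma> \<in> AUS3 \<longleftrightarrow> frob2 \<sigma> \<le> 1/2" by (rule AUS3_iff[OF assms])
  have p: "Re (mtrace (\<sigma> ** \<sigma>)) = frob2 \<sigma>" by (rule purity_frob2[OF assms])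
  have fn: "frob_norm (\<sigma> - (1 / 4) *\<^sub>R mat 1) = sqrt (frob2 \<sigma> - 1/4)"
    unfolding frob_norm_frob2 frob2_shift[OF assms] ..
  have nn: "frob2 \<sigma> - 1/4 \<ge> 0"
    using frob2_nonneg[of "\<sigma> - (1 / 4) *\<^sub>R mat 1"] frob2_shift[OF assms] by simp
  have "sqrt (frob2 \<sigma> - 1/4) \<le> 1/2 \<longleftrightarrow> frob2 \<sigma> - 1/4 \<le> 1/4"
    using nn by (metis real_sqrt_le_iff real_sqrt_pow2 real_sqrt_four real_sqrt_divide real_sqrt_one
        power2_eq_square real_sqrt_mult_self)
  then show ?thesis using e1 p fn by auto
qed


end
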